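(* Let $G$ be a plane DAG and let $P$ be a subhamiltonian path for $G$. Suppose $G$ has an internal face $f$ whose boundary consists of two directed paths from $v_s$ to $v_t$, namely $(v_s,w,v_t)$ and $(v_s,v_1,\dots,v_r,v_t)$ with $r\ge 1$ (so $f$ is non-transitive). Then the set of augmenting edges of $P$ drawn inside $f$ is exactly one of the following: (i) the single edge $wv_1$; (ii) the single edge $v_rw$; (iii) the two edges $v_iw$ and $wv_{i+1}$ for some $1\le i<r$.
   Context: A plane DAG is a DAG together with a fixed upward planar embedding (an equivalence class of upward planar drawings, i.e., planar drawings in which every edge is $y$-monotone increasing from tail to head, having the same rotation system, the same outer face, and the same left-to-right order of outgoing and of incoming edges at each vertex). An $st$-planar graph is a DAG with a single source $s$ and a single sink $t$ admitting a planar drawing with $s,t$ on the outer face. A subhamiltonian path for a plane DAG $G$ is a directed Hamiltonian path $P$ from $s$ to $t$ in some $st$-planar graph $\overline{G}$ that contains $G$ as a spanning subgraph, where $\overline{G}$ is equipped with an upward planar embedding (with $s,t$ on the outer face) whose restriction to $G$ coincides with the prescribed embedding of $G$. The edges of $P$ not belonging to $G$ are called augmenting edges; each of them lies inside some face of $G$. An internal face of a plane DAG whose boundary consists of two directed paths with common endpoints is an $st$-face; it is transitive if one of the two paths is a single edge and non-transitive otherwise. *)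

theory Defs
  imports "HOL-Analysis.Analysis"
begin

text \<open>Directed graphs are given by a finite vertex set V and an edge relation E (pairs (tail, head)).
  The plane is modelled by the complex numbers; the y-coordinate is Im.\<close>

definition is_dag :: "'v set \<Rightarrow> ('v \<times> 'v) set \<Rightarrow> bool" where
  "is_dag V E \<longleftrightarrow> finite V \<and> E \<subseteq> V \<times> V \<and> (\<forall>x. (x, x) \<notin> E\<^sup>+)"

definition upward_planar_drawing ::
  "'v set \<Rightarrow> ('v \<times> 'v) set \<Rightarrow> ('v \<Rightarrow> complex) \<Rightarrow> ('v \<times> 'v \<Rightarrow> real \<Rightarrow> complex) \<Rightarrow> bool" where
  "upward_planar_drawing V E pos crv \<longleftrightarrow>
     inj_on pos V \<and>
     (\<forall>e\<in>E. path (crv e) \<and> pathstart (crv e) = pos (fst e) \<and> pathfinish (crv e) = pos (snd e) \<and>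
        (\<forall>a b. 0 \<le> a \<longrightarrow> a < b \<longrightarrow> b \<le> 1 \<longrightarrow> Im (crv e a) < Im (crv e b))) \<and>
     (\<forall>e\<in>E. \<forall>e'\<in>E. e \<noteq> e' \<longrightarrow>
        path_image (crv e) \<inter> path_image (crv e') \<subseteq> pos ` ({fst e, snd e} \<inter> {fst e', snd e'})) \<and>
     (\<forall>e\<in>E. \<forall>x\<in>V. pos x \<in> path_image (crv e) \<longrightarrow> x = fst e \<or> x = snd e)"

definition drawing_image ::
  "'v set \<Rightarrow> ('v \<times> 'v) set \<Rightarrow> ('v \<Rightarrow> complex) \<Rightarrow> ('v \<times> 'v \<Rightarrow> real \<Rightarrow> complex) \<Rightarrow> complex set" where
  "drawing_image V E pos crv = pos ` V \<union> (\<Union>e\<in>E. path_image (crv e))"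

definition faces ::
  "'v set \<Rightarrow> ('v \<times> 'v) set \<Rightarrow> ('v \<Rightarrow> complex) \<Rightarrow> ('v \<times> 'v \<Rightarrow> real \<Rightarrow> complex) \<Rightarrow> complex set set" where
  "faces V E pos crv = components (- drawing_image V E pos crv)"

definition internal_face ::
  "'v set \<Rightarrow> ('v \<times> 'v) set \<Rightarrow> ('v \<Rightarrow> complex) \<Rightarrow> ('v \<times> 'v \<Rightarrow> real \<Rightarrow> complex) \<Rightarrow> complex set \<Rightarrow> bool" where
  "internal_face V E pos crv F \<longleftrightarrow> F \<in> faces V E pos crv \<and> bounded F"

definition outer_face ::
  "'v set \<Rightarrow> ('v \<times> 'v) set \<Rightarrow> ('v \<Rightarrow> complex) \<Rightarrow> ('v \<times> 'v \<Rightarrow> real \<Rightarrow> complex) \<Rightarrow> complex set \<Rightarrow> bool" where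
  "outer_face V E pos crv F \<longleftrightarrow> F \<in> faces V E pos crv \<and> \<not> bounded F"

definition st_planar_drawing ::
  "'v set \<Rightarrow> ('v \<times> 'v) set \<Rightarrow> 'v \<Rightarrow> 'v \<Rightarrow> ('v \<Rightarrow> complex) \<Rightarrow> ('v \<times> 'v \<Rightarrow> real \<Rightarrow> complex) \<Rightarrow> bool" where
  "st_planar_drawing V E s t pos crv \<longleftrightarrow>
     is_dag V E \<and> s \<in> V \<and> t \<in> V \<and>
     (\<forall>x\<in>V. (\<not> (\<exists>u. (u, x) \<in> E)) \<longleftrightarrow> x = s) \<and>
     (\<forall>x\<in>V. (\<not> (\<exists>u. (x, u) \<in> E)) \<longleftrightarrow> x = t) \<and>
     upward_planar_drawing V E pos crv \<and>
     (\<exists>F. outer_face V E pos crv F \<and> pos s \<in> frontier F) \<and>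
     (\<exists>F. outer_face V E pos crv F \<and> pos t \<in> frontier F)"

definition path_edges :: "'v list \<Rightarrow> ('v \<times> 'v) set" where
  "path_edges P = set (zip P (tl P))"

definition is_ham_path :: "'v set \<Rightarrow> ('v \<times> 'v) set \<Rightarrow> 'v list \<Rightarrow> 'v \<Rightarrow> 'v \<Rightarrow> bool" where
  "is_ham_path V E P s t \<longleftrightarrow>
     P \<noteq> [] \<and> distinct P \<and> set P = V \<and> hd P = s \<and> last P = t \<and> path_edges P \<subseteq> E"

definition augmenting_edges_in ::
  "('v \<times> 'v) set \<Rightarrow> 'v list \<Rightarrow> ('v \<times> 'v \<Rightarrow> real \<Rightarrow> complex) \<Rightarrow> complex set \<Rightarrow> ('v \<times> 'v) set" where
  "augmenting_edges_in E P crv F = {e \<in> path_edges P. e \<notin> E \<and> crv e ` {0<..<1} \<subseteq> F}"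

end

theory Submission
  imports Defs
begin


locale updraw =
  fixes V :: "'v set" and Eb :: "('v \<times> 'v) set" and pos :: "'v \<Rightarrow> complex"
    and crv :: "'v \<times> 'v \<Rightarrow> real \<Rightarrow> complex"
  assumes upd: "upward_planar_drawing V Eb pos crv"
begin

lemma edge_path: "e \<in> Eb \<Longrightarrow> path (crv e)"
  and edge_start: "e \<in> Eb \<Longrightarrow> crv e 0 = pos (fst e)"
  and edge_finish: "e \<in> Eb \<Longrightarrow> crv e 1 = pos (snd e)"
  and edge_mono: "e \<in> Eb \<Longrightarrow> 0 \<le> a \<Longrightarrow> a < b \<Longrightarrow> b \<le> 1 \<Longrightarrow> Im (crv e a) < Im (crv e b)"
  using upd unfolding upward_planar_drawing_def pathstart_def pathfinish_def by auto

lemma edge_disj: "e \<in> Eb \<Longrightarrow> e' \<in> Eb \<Longrightarrow> e \<noteq> e' \<Longrightarrow>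
   path_image (crv e) \<inter> path_image (crv e') \<subseteq> pos ` ({fst e, snd e} \<inter> {fst e', snd e'})"
  using upd unfolding upward_planar_drawing_def by auto

lemma edge_vert: "e \<in> Eb \<Longrightarrow> x \<in> V \<Longrightarrow> pos x \<in> path_image (crv e) \<Longrightarrow> x = fst e \<or> x = snd e"
  using upd unfolding upward_planar_drawing_def by auto

lemma pos_inj: "inj_on pos V"
  using upd unfolding upward_planar_drawing_def by auto

lemma edge_mono_le: "e \<in> Eb \<Longrightarrow> 0 \<le> a \<Longrightarrow> a \<le> b \<Longrightarrow> b \<le> 1 \<Longrightarrow> Im (crv e a) \<le> Im (crv e b)"
  by (cases "a = b") (auto dest: edge_mono[of e a b])

lemma edge_inj: "e \<in> Eb \<Longrightarrow> a \<in> {0..1} \<Longrightarrow> b \<in> {0..1} \<Longrightarrow> Im (crv e a) = Im (crv e b) \<Longrightarrow> a = b"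
  by (metis atLeastAtMost_iff edge_mono less_irrefl linorder_neqE_linordered_idom)

lemma edge_height: "e \<in> Eb \<Longrightarrow> Im (pos (fst e)) < Im (pos (snd e))"
  using edge_mono[of e 0 1] edge_start edge_finish by auto

lemma img_bounds: assumes "e \<in> Eb" "q \<in> path_image (crv e)"
  shows "Im (pos (fst e)) \<le> Im q" "Im q \<le> Im (pos (snd e))"
proof -
  obtain t where t: "t \<in> {0..1}" "q = crv e t" using assms(2) unfolding path_image_def by auto
  show "Im (pos (fst e)) \<le> Im q" using edge_mono_le[OF assms(1), of 0 t] t edge_start[OF assms(1)] by auto
  show "Im q \<le> Im (pos (snd e))" using edge_mono_le[OF assms(1), of t 1] t edge_finish[OF assms(1)] by auto
qed

lemma img_low: assumes "e \<in> Eb" "q \<in> path_image (crv e)" "Im q \<le> Im (pos (fst e))"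
  shows "q = pos (fst e)"
proof -
  obtain t where t: "t \<in> {0..1}" "q = crv e t" using assms(2) unfolding path_image_def by auto
  have "t = 0" using edge_mono[OF assms(1), of 0 t] t assms(3) edge_start[OF assms(1)] by force
  then show ?thesis using t edge_start[OF assms(1)] by auto
qed

lemma img_high: assumes "e \<in> Eb" "q \<in> path_image (crv e)" "Im q \<ge> Im (pos (snd e))"
  shows "q = pos (snd e)"
proof -
  obtain t where t: "t \<in> {0..1}" "q = crv e t" using assms(2) unfolding path_image_def by auto
  have "t = 1" using edge_mono[OF assms(1), of t 1] t assms(3) edge_finish[OF assms(1)] by force
  then show ?thesis using t edge_finish[OF assms(1)] by auto
qed

lemma open_part: assumes "e \<in> Eb" "t \<in> {0<..<1}"
  shows "Im (pos (fst e)) < Im (crv e t)" "Im (crv e t) < Im (pos (snd e))"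
  using edge_mono[OF assms(1), of 0 t] edge_mono[OF assms(1), of t 1] assms(2) edge_start[OF assms(1)]
    edge_finish[OF assms(1)] by auto

definition CImg :: "(nat \<Rightarrow> 'v) \<Rightarrow> nat \<Rightarrow> complex set" where
  "CImg c m = (\<Union>j<m. path_image (crv (c j, c (Suc j))))"

lemma chain_heights:
  assumes ch: "\<forall>j<m. (c j, c (Suc j)) \<in> Eb" and jk: "j < k" "k \<le> m"
  shows "Im (pos (c j)) < Im (pos (c k))"
  using jk
proof (induction k)
  case 0 then show ?case by simp
next
  case (Suc k)
  have e: "Im (pos (c k)) < Im (pos (c (Suc k)))" using edge_height[of "(c k, c (Suc k))"] ch Suc by auto
  show ?case
  proof (cases "j = k")
    case True then show ?thesis using e by simp
  next
    case False then show ?thesis using Suc e by auto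
  qed
qed

lemma chain_heights_le:
  assumes ch: "\<forall>j<m. (c j, c (Suc j)) \<in> Eb" and jk: "j \<le> k" "k \<le> m"
  shows "Im (pos (c j)) \<le> Im (pos (c k))"
  using chain_heights[OF ch, of j k] jk by (cases "j = k") auto

lemma chain_bounds:
  assumes ch: "\<forall>j<m. (c j, c (Suc j)) \<in> Eb" and q: "q \<in> CImg c m"
  shows "Im (pos (c 0)) \<le> Im q" "Im q \<le> Im (pos (c m))"
proof -
  obtain j where j: "j < m" "q \<in> path_image (crv (c j, c (Suc j)))" using q unfolding CImg_def by auto
  have e: "(c j, c (Suc j)) \<in> Eb" using ch j by auto
  show "Im (pos (c 0)) \<le> Im q" using img_bounds(1)[OF e j(2)] chain_heights_le[OF ch, of 0 j] j by auto
  show "Im q \<le> Im (pos (c m))" using img_bounds(2)[OF e j(2)] chain_heights_le[OF ch, of "Suc j" m] j by auto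
qed

lemma chain_inj:
  assumes ch: "\<forall>j<m. (c j, c (Suc j)) \<in> Eb"
  shows "inj_on Im (CImg c m)"
proof (rule inj_onI)
  fix p q assume p: "p \<in> CImg c m" and q: "q \<in> CImg c m" and eq: "Im p = Im q"
  obtain j where j: "j < m" "p \<in> path_image (crv (c j, c (Suc j)))" using p unfolding CImg_def by auto
  obtain k where k: "k < m" "q \<in> path_image (crv (c k, c (Suc k)))" using q unfolding CImg_def by auto
  have ej: "(c j, c (Suc j)) \<in> Eb" using ch j by auto
  have ek: "(c k, c (Suc k)) \<in> Eb" using ch k by auto
  have main: "p = q" if j: "j < m" "p \<in> path_image (crv (c j, c (Suc j)))"
      and k: "k < m" "q \<in> path_image (crv (c k, c (Suc k)))" and eq: "Im p = Im q" and jk: "j < k"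
    for j k p q
  proof -
    have ej: "(c j, c (Suc j)) \<in> Eb" using ch j by auto
    have ek: "(c k, c (Suc k)) \<in> Eb" using ch k by auto
    have a: "Im p \<le> Im (pos (c (Suc j)))" using img_bounds(2)[OF ej j(2)] by simp
    have b: "Im (pos (c k)) \<le> Im q" using img_bounds(1)[OF ek k(2)] by simp
    have c: "Im (pos (c (Suc j))) \<le> Im (pos (c k))" using chain_heights_le[OF ch, of "Suc j" k] jk k by auto
    have "Suc j = k"
      using chain_heights[OF ch, of "Suc j" k] jk k a b c eq by (cases "Suc j = k") auto
    moreover have "p = pos (c (Suc j))" using img_high[OF ej j(2)] a b c eq by auto
    moreover have "q = pos (c k)" using img_low[OF ek k(2)] a b c eq by auto
    ultimately show ?thesis by simp
  qed
  show "p = q"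
  proof (cases j k rule: linorder_cases)
    case less then show ?thesis using main[OF j k eq] by simp
  next
    case greater then show ?thesis using main[OF k j eq[symmetric]] by simp
  next
    case equal
    obtain a where a: "a \<in> {0..1}" "p = crv (c j, c (Suc j)) a" using j(2) unfolding path_image_def by auto
    obtain b where b: "b \<in> {0..1}" "q = crv (c j, c (Suc j)) b" using k(2) equal unfolding path_image_def by auto
    have "a = b" using edge_inj[OF ej a(1) b(1)] a b eq by simp
    then show ?thesis using a b by simp
  qed
qed

lemma chain_compact: assumes ch: "\<forall>j<m. (c j, c (Suc j)) \<in> Eb" shows "compact (CImg c m)"
  unfolding CImg_def using ch by (intro compact_UN) (auto intro!: compact_path_image edge_path)

lemma chain_vert: assumes ch: "\<forall>j<m. (c j, c (Suc j)) \<in> Eb" "j \<le> m" "m \<ge> 1"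
  shows "pos (c j) \<in> CImg c m"
proof (cases "j < m")
  case True
  then have "pos (c j) \<in> path_image (crv (c j, c (Suc j)))"
    using ch edge_start[of "(c j, c (Suc j))"] pathstart_in_path_image[of "crv (c j, c (Suc j))"]
    unfolding pathstart_def by auto
  then show ?thesis using True unfolding CImg_def by auto
next
  case False
  then obtain k where k: "j = Suc k" "k < m" using ch by (cases j) auto
  then have "pos (c j) \<in> path_image (crv (c k, c (Suc k)))"
    using ch edge_finish[of "(c k, c (Suc k))"] pathfinish_in_path_image[of "crv (c k, c (Suc k))"]
    unfolding pathfinish_def by auto
  then show ?thesis using k unfolding CImg_def by auto
qed

lemma chain_surj:
  assumes ch: "\<forall>j<m. (c j, c (Suc j)) \<in> Eb" and m: "m \<ge> 1"
  shows "Im ` CImg c m = {Im (pos (c 0))..Im (pos (c m))}"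
proof
  show "Im ` CImg c m \<subseteq> {Im (pos (c 0))..Im (pos (c m))}" using chain_bounds[OF ch] by auto
next
  show "{Im (pos (c 0))..Im (pos (c m))} \<subseteq> Im ` CImg c m"
  proof
    fix h assume h: "h \<in> {Im (pos (c 0))..Im (pos (c m))}"
    have "\<exists>j<m. Im (pos (c j)) \<le> h \<and> h \<le> Im (pos (c (Suc j)))"
    proof -
      have "\<forall>k. k \<le> m \<longrightarrow> Im (pos (c 0)) \<le> h \<longrightarrow> h \<le> Im (pos (c k)) \<longrightarrow> k \<ge> 1 \<longrightarrow>
          (\<exists>j<k. Im (pos (c j)) \<le> h \<and> h \<le> Im (pos (c (Suc j))))"
      proof (intro allI)
        fix k show "k \<le> m \<longrightarrow> Im (pos (c 0)) \<le> h \<longrightarrow> h \<le> Im (pos (c k)) \<longrightarrow> k \<ge> 1 \<longrightarrow>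
          (\<exists>j<k. Im (pos (c j)) \<le> h \<and> h \<le> Im (pos (c (Suc j))))"
        proof (induction k)
          case 0 then show ?case by simp
        next
          case (Suc k)
          show ?case
          proof (intro impI)
            assume a: "Suc k \<le> m" "Im (pos (c 0)) \<le> h" "h \<le> Im (pos (c (Suc k)))" "1 \<le> Suc k"
            show "\<exists>j<Suc k. Im (pos (c j)) \<le> h \<and> h \<le> Im (pos (c (Suc j)))"
            proof (cases "Im (pos (c k)) \<le> h")
              case True then show ?thesis using a by auto
            next
              case False
              then have "k \<ge> 1" using a by (cases k) auto
              have k1: "k \<le> m" "h \<le> Im (pos (c k))" using a False by auto
              have "\<exists>j<k. Im (pos (c j)) \<le> h \<and> h \<le> Im (pos (c (Suc j)))"
                using Suc.IH k1 \<open>k \<ge> 1\<close> a(2) by blast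
              then obtain j where "j < k" "Im (pos (c j)) \<le> h" "h \<le> Im (pos (c (Suc j)))"
                by blast
              then show ?thesis by (intro exI[of _ j]) auto
            qed
          qed
        qed
      qed
      then show ?thesis using h m by auto
    qed
    then obtain j where j: "j < m" "Im (pos (c j)) \<le> h" "h \<le> Im (pos (c (Suc j)))" by blast
    have e: "(c j, c (Suc j)) \<in> Eb" using ch j by auto
    let ?g = "crv (c j, c (Suc j))"
    have "continuous_on (path_image ?g) Im" by (intro continuous_intros)
    then have "connected (Im ` path_image ?g)"
      using connected_continuous_image connected_path_image edge_path[OF e] by blast
    moreover have "pos (c j) \<in> path_image ?g"
      using pathstart_in_path_image[of ?g] edge_start[OF e] unfolding pathstart_def by simp
    moreover have "pos (c (Suc j)) \<in> path_image ?g"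
      using pathfinish_in_path_image[of ?g] edge_finish[OF e] unfolding pathfinish_def by simp
    ultimately have "{Im (pos (c j))..Im (pos (c (Suc j)))} \<subseteq> Im ` path_image ?g"
      using connected_contains_Icc by blast
    then have "h \<in> Im ` path_image ?g" using j by auto
    then show "h \<in> Im ` CImg c m" using j unfolding CImg_def by auto
  qed
qed

definition xfun :: "(nat \<Rightarrow> 'v) \<Rightarrow> nat \<Rightarrow> real \<Rightarrow> real" where
  "xfun c m h = Re (the_inv_into (CImg c m) Im h)"

lemma xfun_cont:
  assumes ch: "\<forall>j<m. (c j, c (Suc j)) \<in> Eb" and m: "m \<ge> 1"
  shows "continuous_on {Im (pos (c 0))..Im (pos (c m))} (xfun c m)"
proof -
  have "continuous_on (Im ` CImg c m) (the_inv_into (CImg c m) Im)"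
    by (rule continuous_on_inv) (auto intro!: continuous_intros chain_compact[OF ch]
        the_inv_into_f_f chain_inj[OF ch])
  then show ?thesis unfolding xfun_def chain_surj[OF ch m] by (intro continuous_intros)
qed

lemma xfun_char:
  assumes ch: "\<forall>j<m. (c j, c (Suc j)) \<in> Eb" and m: "m \<ge> 1"
  shows "q \<in> CImg c m \<longleftrightarrow> Im (pos (c 0)) \<le> Im q \<and> Im q \<le> Im (pos (c m)) \<and> Re q = xfun c m (Im q)"
proof
  assume q: "q \<in> CImg c m"
  then show "Im (pos (c 0)) \<le> Im q \<and> Im q \<le> Im (pos (c m)) \<and> Re q = xfun c m (Im q)"
    using chain_bounds[OF ch q] the_inv_into_f_f[OF chain_inj[OF ch] q] unfolding xfun_def by auto
next
  assume a: "Im (pos (c 0)) \<le> Im q \<and> Im q \<le> Im (pos (c m)) \<and> Re q = xfun c m (Im q)"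
  then have "Im q \<in> Im ` CImg c m" using chain_surj[OF ch m] by auto
  then obtain p where p: "p \<in> CImg c m" "Im p = Im q" by auto
  then have "the_inv_into (CImg c m) Im (Im q) = p"
    using the_inv_into_f_f[OF chain_inj[OF ch] p(1)] by simp
  then have "p = q" using a p by (simp add: xfun_def complex_eq_iff)
  then show "q \<in> CImg c m" using p by simp
qed

end


lemma bounded_mono_less:
  fixes f :: "nat \<Rightarrow> 'a::order"
  assumes "\<forall>j<m. f j < f (Suc j)" "j < k" "k \<le> m"
  shows "f j < f k"
  using assms(2,3)
proof (induction k)
  case 0 then show ?case by simp
next
  case (Suc k)
  have e: "f k < f (Suc k)" using assms(1) Suc by auto
  show ?case
  proof (cases "j = k")
    case True then show ?thesis using e by simp
  next
    case False then show ?thesis using Suc e by (meson less_Suc_eq order.strict_trans Suc_leD)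
  qed
qed

lemma curve_pos_fwd:
  fixes g :: "real \<Rightarrow> complex" and f :: "complex \<Rightarrow> real"
  assumes g: "path g" and cf: "continuous_on (path_image g) f" and f0: "f (g 0) > 0"
    and t: "t \<in> {0..1}" and nz: "\<forall>s\<in>{0<..t}. f (g s) \<noteq> 0"
  shows "f (g t) > 0"
proof (rule ccontr)
  assume "\<not> f (g t) > 0"
  then have le: "f (g t) \<le> 0" by simp
  have "continuous_on {0..1} (\<lambda>s. f (g s))"
    using continuous_on_compose2[OF cf, of "{0..1}" g] g unfolding path_def path_image_def by auto
  then have "continuous_on {0..t} (\<lambda>s. f (g s))"
    by (rule continuous_on_subset) (use t in auto)
  then obtain x where x: "0 \<le> x" "x \<le> t" "f (g x) = 0"
    using IVT2'[of "\<lambda>s. f (g s)" t 0 0] le f0 t by auto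
  have "x \<noteq> 0" using x f0 by auto
  then show False using nz x by auto
qed

lemma curve_pos_bwd:
  fixes g :: "real \<Rightarrow> complex" and f :: "complex \<Rightarrow> real"
  assumes g: "path g" and cf: "continuous_on (path_image g) f" and f1: "f (g 1) > 0"
    and t: "t \<in> {0..1}" and nz: "\<forall>s\<in>{t..<1}. f (g s) \<noteq> 0"
  shows "f (g t) > 0"
proof (rule ccontr)
  assume "\<not> f (g t) > 0"
  then have le: "f (g t) \<le> 0" by simp
  have "continuous_on {0..1} (\<lambda>s. f (g s))"
    using continuous_on_compose2[OF cf, of "{0..1}" g] g unfolding path_def path_image_def by auto
  then have "continuous_on {t..1} (\<lambda>s. f (g s))"
    by (rule continuous_on_subset) (use t in auto)
  then obtain x where x: "t \<le> x" "x \<le> 1" "f (g x) = 0"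
    using IVT'[of "\<lambda>s. f (g s)" t 0 1] le f1 t by auto
  have "x \<noteq> 1" using x f1 by auto
  then show False using nz x by auto
qed

lemma chain_pos_fwd:
  fixes \<gamma> :: "nat \<Rightarrow> real \<Rightarrow> complex" and f :: "complex \<Rightarrow> real"
  assumes p: "\<forall>j<m. path (\<gamma> j)" and cf: "\<forall>j<m. continuous_on (path_image (\<gamma> j)) f"
    and link: "\<forall>j. Suc j < m \<longrightarrow> \<gamma> j 1 = \<gamma> (Suc j) 0"
    and f0: "f (\<gamma> 0 0) > 0"
    and nz: "\<forall>j<m. \<forall>t\<in>{0<..<1}. f (\<gamma> j t) \<noteq> 0"
    and nzv: "\<forall>j. Suc j < m \<longrightarrow> f (\<gamma> j 1) \<noteq> 0"
  shows "\<forall>j<m. \<forall>t\<in>{0..<1}. f (\<gamma> j t) > 0"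
proof -
  have st: "j < m \<longrightarrow> f (\<gamma> j 0) > 0" for j
  proof (induction j)
    case 0 then show ?case using f0 by simp
  next
    case (Suc j)
    show ?case
    proof
      assume j: "Suc j < m"
      have "f (\<gamma> j 1) > 0"
      proof (rule curve_pos_fwd[of "\<gamma> j" f 1])
        show "path (\<gamma> j)" using p j by auto
        show "continuous_on (path_image (\<gamma> j)) f" using cf j by auto
        show "f (\<gamma> j 0) > 0" using Suc.IH j by auto
        show "(1::real) \<in> {0..1}" by simp
        show "\<forall>s\<in>{0<..1}. f (\<gamma> j s) \<noteq> 0" using nz nzv j
          by (metis Suc_lessD greaterThanAtMost_iff greaterThanLessThan_iff order_less_le)
      qed
      then show "f (\<gamma> (Suc j) 0) > 0" using link j by simp
    qed
  qed
  show ?thesis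
  proof (intro allI impI ballI)
    fix j t assume j: "j < m" and t: "t \<in> {0..<1::real}"
    show "f (\<gamma> j t) > 0"
    proof (rule curve_pos_fwd[of "\<gamma> j" f t])
      show "path (\<gamma> j)" using p j by auto
      show "continuous_on (path_image (\<gamma> j)) f" using cf j by auto
      show "f (\<gamma> j 0) > 0" using st j by auto
      show "t \<in> {0..1}" using t by simp
      show "\<forall>s\<in>{0<..t}. f (\<gamma> j s) \<noteq> 0" using nz j t by auto
    qed
  qed
qed

lemma chain_pos_bwd:
  fixes \<gamma> :: "nat \<Rightarrow> real \<Rightarrow> complex" and f :: "complex \<Rightarrow> real"
  assumes p: "\<forall>j<m. path (\<gamma> j)" and cf: "\<forall>j<m. continuous_on (path_image (\<gamma> j)) f"
    and link: "\<forall>j. Suc j < m \<longrightarrow> \<gamma> j 1 = \<gamma> (Suc j) 0"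
    and f1: "f (\<gamma> (m - 1) 1) > 0" and m: "m \<ge> 1"
    and nz: "\<forall>j<m. \<forall>t\<in>{0<..<1}. f (\<gamma> j t) \<noteq> 0"
    and nzv: "\<forall>j. Suc j < m \<longrightarrow> f (\<gamma> j 1) \<noteq> 0"
  shows "\<forall>j<m. \<forall>t\<in>{0<..1}. f (\<gamma> j t) > 0"
proof -
  have fin: "k < m \<longrightarrow> f (\<gamma> (m - 1 - k) 1) > 0" for k
  proof (induction k)
    case 0 then show ?case using f1 by simp
  next
    case (Suc k)
    show ?case
    proof
      assume k: "Suc k < m"
      define j where "j = m - 1 - Suc k"
      have jj: "Suc j = m - 1 - k" "Suc j < m" using k unfolding j_def by auto
      have "f (\<gamma> (Suc j) 0) > 0"
      proof (rule curve_pos_bwd[of "\<gamma> (Suc j)" f 0])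
        show "path (\<gamma> (Suc j))" using p jj by auto
        show "continuous_on (path_image (\<gamma> (Suc j))) f" using cf jj by auto
        show "f (\<gamma> (Suc j) 1) > 0" using Suc.IH jj k by auto
        show "(0::real) \<in> {0..1}" by simp
        show "\<forall>s\<in>{0..<1}. f (\<gamma> (Suc j) s) \<noteq> 0"
        proof
          fix s :: real assume s: "s \<in> {0..<1}"
          show "f (\<gamma> (Suc j) s) \<noteq> 0"
          proof (cases "s = 0")
            case True then show ?thesis using nzv link jj by metis
          next
            case False then show ?thesis using nz jj s by auto
          qed
        qed
      qed
      then show "f (\<gamma> (m - 1 - Suc k) 1) > 0" using link jj unfolding j_def by metis
    qed
  qed
  show ?thesis
  proof (intro allI impI ballI)
    fix j t assume j: "j < m" and t: "t \<in> {0<..1::real}"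
    show "f (\<gamma> j t) > 0"
    proof (rule curve_pos_bwd[of "\<gamma> j" f t])
      show "path (\<gamma> j)" using p j by auto
      show "continuous_on (path_image (\<gamma> j)) f" using cf j by auto
      show "f (\<gamma> j 1) > 0" using fin[of "m - 1 - j"] j by auto
      show "t \<in> {0..1}" using t by simp
      show "\<forall>s\<in>{t..<1}. f (\<gamma> j s) \<noteq> 0" using nz j t by auto
    qed
  qed
qed

lemma ray_escape:
  fixes F C :: "complex set" and z d :: complex
  assumes bF: "bounded F" and zF: "z \<in> F" and d: "d \<noteq> 0"
    and avoid: "\<forall>s\<ge>0. z + of_real s * d \<notin> C" and fr: "frontier F \<subseteq> C"
  shows False
proof -
  define K where "K = (\<lambda>s. z + of_real s * d) ` {0..}"
  have cK: "connected K" unfolding K_def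
    by (intro connected_continuous_image continuous_intros) simp
  have "z \<in> K" unfolding K_def by (auto intro!: image_eqI[of _ _ 0])
  then have KF: "K \<inter> F \<noteq> {}" using zF by auto
  obtain R where R: "R > 0" "F \<subseteq> ball 0 R" using bounded_subset_ballD[OF bF] by blast
  define s where "s = (R + norm z) / norm d"
  have s0: "s \<ge> 0" unfolding s_def using R by auto
  have "norm (of_real s * d) = \<bar>s\<bar> * norm d" by (simp add: norm_mult)
  also have "\<dots> = R + norm z" unfolding s_def using d R by (simp add: abs_of_nonneg)
  finally have "norm (of_real s * d) = R + norm z" .
  moreover have "norm (of_real s * d) \<le> norm (z + of_real s * d) + norm z"
    by (metis add.commute add_diff_cancel_left' norm_triangle_ineq4)
  ultimately have "norm (z + of_real s * d) \<ge> R" by simp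
  then have "z + of_real s * d \<notin> F" using R by auto
  moreover have "z + of_real s * d \<in> K" unfolding K_def using s0 by auto
  ultimately have "K - F \<noteq> {}" by auto
  then have "K \<inter> frontier F \<noteq> {}" using connected_Int_frontier[OF cK KF] by simp
  then obtain y where "y \<in> K" "y \<in> C" using fr by auto
  then show False using avoid unfolding K_def by auto
qed

lemma find_gap:
  fixes f :: "nat \<Rightarrow> nat"
  assumes "f 0 < k" "k < f n" "\<forall>j\<le>n. f j \<noteq> k"
  shows "\<exists>i<n. f i < k \<and> k < f (Suc i)"
  using assms
proof (induction n)
  case 0 then show ?case by simp
next
  case (Suc n)
  show ?case
  proof (cases "f n < k")
    case True then show ?thesis using Suc.prems by auto
  next
    case False
    have "f n \<noteq> k" using Suc.prems(3) by auto
    then have "k < f n" using False by auto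
    then obtain i where "i < n" "f i < k" "k < f (Suc i)" using Suc by auto
    then show ?thesis by (intro exI[of _ i]) auto
  qed
qed



theorem mainTheorem3:
  fixes V :: "'v set" and E Eb :: "('v \<times> 'v) set"
    and pos :: "'v \<Rightarrow> complex" and crv :: "'v \<times> 'v \<Rightarrow> real \<Rightarrow> complex"
    and P :: "'v list" and s t vs w vt :: 'v and v :: "nat \<Rightarrow> 'v" and r :: nat
    and F :: "complex set"
  assumes G_dag: "is_dag V E"
    and spanning: "E \<subseteq> Eb"
    and Gbar: "st_planar_drawing V Eb s t pos crv"
    and ham: "is_ham_path V Eb P s t"
    and face: "internal_face V E pos crv F"
    and r_pos: "r \<ge> 1"
    and verts: "vs \<in> V" "w \<in> V" "vt \<in> V" "v ` {1..r} \<subseteq> V"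
    and dist: "inj_on v {1..r}" "vs \<notin> v ` {1..r}" "w \<notin> v ` {1..r}" "vt \<notin> v ` {1..r}"
      "vs \<noteq> w" "vs \<noteq> vt" "w \<noteq> vt"
    and edges: "(vs, w) \<in> E" "(w, vt) \<in> E" "(vs, v 1) \<in> E" "(v r, vt) \<in> E"
      "\<forall>i. 1 \<le> i \<and> i < r \<longrightarrow> (v i, v (Suc i)) \<in> E"
    and boundary: "frontier F =
      (\<Union>e \<in> {(vs, w), (w, vt), (vs, v 1), (v r, vt)} \<union> {(v i, v (Suc i)) | i. 1 \<le> i \<and> i < r}.
         path_image (crv e))"
  shows "augmenting_edges_in E P crv F = {(w, v 1)} \<or>
         augmenting_edges_in E P crv F = {(v r, w)} \<or>
         (\<exists>i. 1 \<le> i \<and> i < r \<and> augmenting_edges_in E P crv F = {(v i, w), (w, v (Suc i))})"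
proof -
  interpret D: updraw V Eb pos crv
    using Gbar unfolding st_planar_drawing_def by unfold_locales auto
  have Ebdag: "is_dag V Eb" using Gbar unfolding st_planar_drawing_def by auto
  then have acyc: "\<And>x. (x, x) \<notin> Eb\<^sup>+" and EbV: "Eb \<subseteq> V \<times> V" unfolding is_dag_def by auto
  have Pd: "distinct P" and PV: "set P = V" and Pe: "path_edges P \<subseteq> Eb"
    using ham unfolding is_ham_path_def by auto
  have pe_mem: "(P!n, P!Suc n) \<in> path_edges P" if "Suc n < length P" for n
    unfolding path_edges_def set_zip using that by (auto simp: nth_tl intro!: exI[of _ n])
  have pe_cases: "\<exists>n. Suc n < length P \<and> e = (P!n, P!Suc n)" if e_in: "e \<in> path_edges P" for e
  proof -
    obtain i where i: "i < min (length P) (length (tl P))" "e = (P!i, tl P ! i)"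
      using e_in unfolding path_edges_def set_zip by blast
    then have "e = (P!i, P!Suc i)" using nth_tl[of i P] by auto
    then show ?thesis using i by (intro exI[of _ i]) auto
  qed
  have Pedge: "(P!n, P!Suc n) \<in> Eb" if "Suc n < length P" for n using pe_mem[OF that] Pe by auto
  have Ptr: "(P!i, P!j) \<in> Eb\<^sup>+" if "i < j" "j < length P" for i j
    using that
  proof (induction j)
    case 0 then show ?case by simp
  next
    case (Suc j)
    show ?case
    proof (cases "i = j")
      case True then show ?thesis using Pedge Suc by auto
    next
      case False
      then have "(P!i, P!j) \<in> Eb\<^sup>+" using Suc by auto
      then show ?thesis using Pedge[of j] Suc by (meson trancl_into_trancl)
    qed
  qed
  define idx where "idx x = (THE n. n < length P \<and> P!n = x)" for x
  have idx: "idx x < length P \<and> P!(idx x) = x" if "x \<in> V" for x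
  proof -
    have "\<exists>!n. n < length P \<and> P!n = x" using distinct_Ex1[OF Pd] PV that by auto
    then show ?thesis unfolding idx_def by (rule theI')
  qed
  have idx_nth: "idx (P!n) = n" if "n < length P" for n
    unfolding idx_def using Pd that by (auto intro!: the_equality simp: nth_eq_iff_index_eq)
  have idx_inj: "x = y" if "x \<in> V" "y \<in> V" "idx x = idx y" for x y using idx that by metis
  have fwd: "idx x < idx y" if xy: "(x, y) \<in> Eb" for x y
  proof (rule ccontr)
    assume n: "\<not> idx x < idx y"
    have xV: "x \<in> V" "y \<in> V" using xy EbV by auto
    show False
    proof (cases "idx x = idx y")
      case True then have "x = y" using idx_inj xV by auto
      then show False using xy acyc by auto
    next
      case False
      then have "idx y < idx x" using n by auto
      then have "(y, x) \<in> Eb\<^sup>+" using Ptr[of "idx y" "idx x"] idx xV by auto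
      then have "(x, x) \<in> Eb\<^sup>+" using xy by (meson trancl_into_trancl2)
      then show False using acyc by auto
    qed
  qed
  define u where "u j = (if j = 0 then vs else if j = Suc r then vt else v j)" for j
  have u0: "u 0 = vs" and ur: "u (Suc r) = vt" unfolding u_def by auto
  have uv: "u j = v j" if "1 \<le> j" "j \<le> r" for j using that unfolding u_def by auto
  have uV: "u j \<in> V" if "j \<le> Suc r" for j using verts that unfolding u_def by auto
  have uE: "\<forall>j<Suc r. (u j, u (Suc j)) \<in> E"
  proof (intro allI impI)
    fix j assume j: "j < Suc r"
    show "(u j, u (Suc j)) \<in> E"
    proof (cases "j = 0")
      case True then show ?thesis using edges(3) r_pos by (simp add: u_def)
    next
      case False
      show ?thesis
      proof (cases "j = r")
        case True then show ?thesis using edges(4) r_pos False by (simp add: u_def)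
      next
        case False2: False
        then show ?thesis using edges(5) j False by (simp add: u_def)
      qed
    qed
  qed
  have uEb: "\<forall>j<Suc r. (u j, u (Suc j)) \<in> Eb" using uE spanning by auto
  have u_idx_mono: "idx (u j) < idx (u l)" if "j < l" "l \<le> Suc r" for j l
    using bounded_mono_less[of "Suc r" "\<lambda>j. idx (u j)" j l] uEb fwd that by auto
  have u_idx_le: "idx (u j) \<le> idx (u l)" if "j \<le> l" "l \<le> Suc r" for j l
    using u_idx_mono[of j l] that by (cases "j = l") auto
  have w_not_u: "u j \<noteq> w" if "j \<le> Suc r" for j
    using that dist unfolding u_def by (auto simp: image_iff)
  define lc :: "nat \<Rightarrow> 'v" where "lc j = (if j = 0 then vs else if j = 1 then w else vt)" for j
  have lc0: "lc 0 = vs" and lc1: "lc 1 = w" and lc2: "lc 2 = vt" unfolding lc_def by auto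
  have lcE: "\<forall>j<2. (lc j, lc (Suc j)) \<in> E"
    using edges(1,2) by (auto simp: lc_def less_2_cases_iff)
  have lcEb: "\<forall>j<2. (lc j, lc (Suc j)) \<in> Eb" using lcE spanning by auto
  define CE where "CE = {(vs, w), (w, vt)} \<union> (\<lambda>j. (u j, u (Suc j))) ` {..<Suc r}"
  define CV where "CV = insert w (u ` {..Suc r})"
  have CE_eq: "{(vs, w), (w, vt), (vs, v 1), (v r, vt)} \<union> {(v i, v (Suc i)) | i. 1 \<le> i \<and> i < r} = CE"
  proof -
    have "(\<lambda>j. (u j, u (Suc j))) ` {..<Suc r} = {(vs, v 1), (v r, vt)} \<union> {(v i, v (Suc i)) | i. 1 \<le> i \<and> i < r}"
    proof
      show "(\<lambda>j. (u j, u (Suc j))) ` {..<Suc r} \<subseteq> {(vs, v 1), (v r, vt)} \<union> {(v i, v (Suc i)) | i. 1 \<le> i \<and> i < r}"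
      proof
        fix e assume "e \<in> (\<lambda>j. (u j, u (Suc j))) ` {..<Suc r}"
        then obtain j where j: "j < Suc r" "e = (u j, u (Suc j))" by auto
        show "e \<in> {(vs, v 1), (v r, vt)} \<union> {(v i, v (Suc i)) | i. 1 \<le> i \<and> i < r}"
        proof (cases "j = 0")
          case True then show ?thesis using j r_pos by (simp add: u_def)
        next
          case False
          show ?thesis
          proof (cases "j = r")
            case True then show ?thesis using j r_pos False by (simp add: u_def)
          next
            case False2: False
            then have "1 \<le> j" "j < r" using j False by auto
            then show ?thesis using j by (auto simp: u_def)
          qed
        qed
      qed
      show "{(vs, v 1), (v r, vt)} \<union> {(v i, v (Suc i)) | i. 1 \<le> i \<and> i < r} \<subseteq> (\<lambda>j. (u j, u (Suc j))) ` {..<Suc r}"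
      proof
        fix e assume "e \<in> {(vs, v 1), (v r, vt)} \<union> {(v i, v (Suc i)) | i. 1 \<le> i \<and> i < r}"
        then consider "e = (vs, v 1)" | "e = (v r, vt)" | i where "1 \<le> i" "i < r" "e = (v i, v (Suc i))" by auto
        then show "e \<in> (\<lambda>j. (u j, u (Suc j))) ` {..<Suc r}"
        proof cases
          case 1 then show ?thesis using r_pos by (auto simp: u_def image_iff intro!: bexI[of _ 0])
        next
          case 2 then show ?thesis using r_pos by (auto simp: u_def image_iff intro!: bexI[of _ r])
        next
          case 3 then show ?thesis by (auto simp: u_def image_iff intro!: bexI[of _ i])
        qed
      qed
    qed
    then show ?thesis unfolding CE_def by auto
  qed
  have CE_E: "CE \<subseteq> E" unfolding CE_def using edges(1,2) uE by auto
  have CE_Eb: "CE \<subseteq> Eb" using CE_E spanning by auto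
  have CE_CV: "fst e \<in> CV \<and> snd e \<in> CV" if "e \<in> CE" for e
    using that unfolding CE_def CV_def using u0 ur by (auto intro: image_eqI[of _ _ 0] image_eqI[of _ _ "Suc r"])
  define Cyc where "Cyc = D.CImg lc 2 \<union> D.CImg u (Suc r)"
  have CImg_lc: "D.CImg lc 2 = path_image (crv (vs, w)) \<union> path_image (crv (w, vt))"
    unfolding D.CImg_def by (auto simp: lc_def less_2_cases_iff)
  have cyc_eq: "(\<Union>e\<in>CE. path_image (crv e)) = Cyc"
    unfolding Cyc_def CImg_lc unfolding D.CImg_def CE_def by auto
  have front: "frontier F = Cyc" using boundary unfolding CE_eq cyc_eq .
  have cyc_mem: "\<exists>e\<in>CE. q \<in> path_image (crv e)" if "q \<in> Cyc" for q
    using that unfolding cyc_eq[symmetric] by auto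
  define lo where "lo = Im (pos vs)"
  define hi where "hi = Im (pos vt)"
  have hu: "Im (pos (u j)) < Im (pos (u l))" if "j < l" "l \<le> Suc r" for j l
    using D.chain_heights[OF uEb that] .
  have hw: "lo < Im (pos w)" "Im (pos w) < hi"
    unfolding lo_def hi_def using D.edge_height[of "(vs, w)"] D.edge_height[of "(w, vt)"] edges(1,2) spanning by auto
  have hu_lo: "lo < Im (pos (u j))" if "1 \<le> j" "j \<le> Suc r" for j
    using hu[of 0 j] that u0 unfolding lo_def by auto
  have hu_hi: "Im (pos (u j)) < hi" if "j \<le> r" for j
    using hu[of j "Suc r"] that ur unfolding hi_def by auto
  define xL where "xL = D.xfun lc 2"
  define xR where "xR = D.xfun u (Suc r)"
  have contL: "continuous_on {lo..hi} xL"
    using D.xfun_cont[OF lcEb] unfolding xL_def lo_def hi_def lc0 lc2 by simp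
  have contR: "continuous_on {lo..hi} xR"
    using D.xfun_cont[OF uEb] unfolding xR_def lo_def hi_def u0 ur by simp
  have charL: "q \<in> D.CImg lc 2 \<longleftrightarrow> lo \<le> Im q \<and> Im q \<le> hi \<and> Re q = xL (Im q)" for q
    using D.xfun_char[OF lcEb, of q] unfolding xL_def lo_def hi_def lc0 lc2 by simp
  have charR: "q \<in> D.CImg u (Suc r) \<longleftrightarrow> lo \<le> Im q \<and> Im q \<le> hi \<and> Re q = xR (Im q)" for q
    using D.xfun_char[OF uEb, of q] unfolding xR_def lo_def hi_def u0 ur by simp
  define \<Delta> where "\<Delta> h = xR h - xL h" for h
  have Dnz: "\<Delta> h \<noteq> 0" if h: "lo < h" "h < hi" for h
  proof
    assume "\<Delta> h = 0"
    define q where "q = Complex (xL h) h"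
    have qL: "q \<in> D.CImg lc 2" using h \<open>\<Delta> h = 0\<close> unfolding charL q_def \<Delta>_def by auto
    have qR: "q \<in> D.CImg u (Suc r)" using h \<open>\<Delta> h = 0\<close> unfolding charR q_def \<Delta>_def by auto
    obtain j where j: "j < 2" "q \<in> path_image (crv (lc j, lc (Suc j)))" using qL unfolding D.CImg_def by auto
    obtain k where k: "k < Suc r" "q \<in> path_image (crv (u k, u (Suc k)))" using qR unfolding D.CImg_def by auto
    have wj: "w \<in> {lc j, lc (Suc j)}" using j by (auto simp: lc_def less_2_cases_iff)
    have nw: "w \<notin> {u k, u (Suc k)}" using w_not_u[of k] w_not_u[of "Suc k"] k by auto
    have ne: "(lc j, lc (Suc j)) \<noteq> (u k, u (Suc k))" using wj nw by auto
    have "q \<in> pos ` ({lc j, lc (Suc j)} \<inter> {u k, u (Suc k)})"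
      using D.edge_disj[OF _ _ ne] lcEb uEb j k by auto
    then obtain x where x: "x \<in> {lc j, lc (Suc j)}" "x \<in> {u k, u (Suc k)}" "q = pos x" by auto
    have "x \<noteq> w" using x nw by auto
    then have "x = vs \<or> x = vt" using x(1) j by (auto simp: lc_def less_2_cases_iff)
    then have "Im q = lo \<or> Im q = hi" using x unfolding lo_def hi_def by auto
    then show False using h unfolding q_def by auto
  qed
  define g1 where "g1 z = (Re z - xL (Im z)) * \<Delta> (Im z)" for z
  define g2 where "g2 z = (xR (Im z) - Re z) * \<Delta> (Im z)" for z
  have contxL: "continuous_on {z. Im z \<in> {lo..hi}} (\<lambda>z. xL (Im z))"
    by (rule continuous_on_compose2[OF contL]) (auto intro: continuous_intros)
  have contxR: "continuous_on {z. Im z \<in> {lo..hi}} (\<lambda>z. xR (Im z))"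
    by (rule continuous_on_compose2[OF contR]) (auto intro: continuous_intros)
  have contg1: "continuous_on {z. Im z \<in> {lo..hi}} g1"
    unfolding g1_def \<Delta>_def using contxL contxR by (intro continuous_intros) auto
  have contg2: "continuous_on {z. Im z \<in> {lo..hi}} g2"
    unfolding g2_def \<Delta>_def using contxL contxR by (intro continuous_intros) auto
  have cyc_g: "(g1 q = 0 \<and> g2 q = (\<Delta> (Im q))\<^sup>2) \<or> (g2 q = 0 \<and> g1 q = (\<Delta> (Im q))\<^sup>2)" if qC: "q \<in> Cyc" for q
  proof -
    consider "q \<in> D.CImg lc 2" | "q \<in> D.CImg u (Suc r)" using qC unfolding Cyc_def by auto
    then show ?thesis
    proof cases
      case 1 then have "Re q = xL (Im q)" unfolding charL by auto
      then show ?thesis unfolding g1_def g2_def \<Delta>_def by (simp add: power2_eq_square)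
    next
      case 2 then have "Re q = xR (Im q)" unfolding charR by auto
      then show ?thesis unfolding g1_def g2_def \<Delta>_def by (simp add: power2_eq_square)
    qed
  qed
  have cyc_gpos: "g1 q \<ge> 0 \<and> g2 q \<ge> 0" if "q \<in> Cyc" for q
    using cyc_g[OF that] by auto
  have cyc_ht: "lo \<le> Im q \<and> Im q \<le> hi" if "q \<in> Cyc" for q
    using that unfolding Cyc_def by (auto simp: charL charR)
  have g_zero: "z \<in> Cyc" if "lo < Im z" "Im z < hi" "g1 z = 0 \<or> g2 z = 0" for z
  proof -
    have "\<Delta> (Im z) \<noteq> 0" using Dnz that by auto
    then have "Re z = xL (Im z) \<or> Re z = xR (Im z)" using that(3) unfolding g1_def g2_def by auto
    then show ?thesis unfolding Cyc_def using that by (auto simp: charL charR)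
  qed
  have L_g2: "g2 z > 0" if "z \<in> D.CImg lc 2" "lo < Im z" "Im z < hi" for z
  proof -
    have "Re z = xL (Im z)" using that unfolding charL by auto
    moreover have "\<Delta> (Im z) \<noteq> 0" using Dnz that by auto
    ultimately show ?thesis unfolding g2_def \<Delta>_def by (simp add: not_square_less_zero less_le)
  qed
  have R_g1: "g1 z > 0" if "z \<in> D.CImg u (Suc r)" "lo < Im z" "Im z < hi" for z
  proof -
    have "Re z = xR (Im z)" using that unfolding charR by auto
    moreover have "\<Delta> (Im z) \<noteq> 0" using Dnz that by auto
    ultimately show ?thesis unfolding g1_def \<Delta>_def by (simp add: not_square_less_zero less_le)
  qed
  define DI where "DI = drawing_image V E pos crv"
  have Fc: "F \<in> components (- DI)" and bF: "bounded F"
    using face unfolding internal_face_def faces_def DI_def by auto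
  have FD: "F \<inter> DI = {}" using in_components_subset[OF Fc] by auto
  have Fne: "F \<noteq> {}" using in_components_nonempty[OF Fc] .
  have posD: "pos x \<in> DI" if "x \<in> V" for x using that unfolding DI_def drawing_image_def by auto
  have imgD: "path_image (crv e) \<subseteq> DI" if "e \<in> E" for e using that unfolding DI_def drawing_image_def by auto
  have CycD: "Cyc \<subseteq> DI" using cyc_mem imgD CE_E by blast
  have FS: "lo < Im z \<and> Im z < hi \<and> g1 z > 0 \<and> g2 z > 0" if zF: "z \<in> F" for z
  proof (rule ccontr)
    assume nS: "\<not> (lo < Im z \<and> Im z < hi \<and> g1 z > 0 \<and> g2 z > 0)"
    have zC: "z \<notin> Cyc" using zF FD CycD by auto
    have fr: "frontier F \<subseteq> Cyc" using front by simp
    consider "Im z \<le> lo" | "Im z \<ge> hi" | "lo < Im z" "Im z < hi" "g1 z < 0" | "lo < Im z" "Im z < hi" "g2 z < 0"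
    proof -
      assume a1: "Im z \<le> lo \<Longrightarrow> thesis" and a2: "Im z \<ge> hi \<Longrightarrow> thesis"
        and a3: "lo < Im z \<Longrightarrow> Im z < hi \<Longrightarrow> g1 z < 0 \<Longrightarrow> thesis"
        and a4: "lo < Im z \<Longrightarrow> Im z < hi \<Longrightarrow> g2 z < 0 \<Longrightarrow> thesis"
      show thesis
      proof (cases "lo < Im z \<and> Im z < hi")
        case False then show thesis using a1 a2 by linarith
      next
        case True
        then have "g1 z \<noteq> 0" "g2 z \<noteq> 0" using g_zero zC by auto
        then show thesis using True nS a3 a4 by linarith
      qed
    qed
    then show False
    proof cases
      case 1
      show False
      proof (rule ray_escape[OF bF zF _ _ fr, of "- \<i>"])
        show "\<forall>s\<ge>0. z + complex_of_real s * - \<i> \<notin> Cyc"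
        proof (intro allI impI)
          fix s :: real assume s: "s \<ge> 0"
          show "z + complex_of_real s * - \<i> \<notin> Cyc"
          proof (cases "s = 0")
            case True then show ?thesis using zC by simp
          next
            case False
            then have "Im (z + complex_of_real s * - \<i>) < lo" using s 1 by simp
            then show ?thesis using cyc_ht by force
          qed
        qed
      qed simp
    next
      case 2
      show False
      proof (rule ray_escape[OF bF zF _ _ fr, of "\<i>"])
        show "\<forall>s\<ge>0. z + complex_of_real s * \<i> \<notin> Cyc"
        proof (intro allI impI)
          fix s :: real assume s: "s \<ge> 0"
          show "z + complex_of_real s * \<i> \<notin> Cyc"
          proof (cases "s = 0")
            case True then show ?thesis using zC by simp
          next
            case False
            then have "Im (z + complex_of_real s * \<i>) > hi" using s 2 by simp
            then show ?thesis using cyc_ht by force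
          qed
        qed
      qed simp
    next
      case 3
      define d where "d = - sgn (\<Delta> (Im z))"
      have dnz: "d \<noteq> 0" using Dnz 3 unfolding d_def by (simp add: sgn_eq_0_iff)
      show False
      proof (rule ray_escape[OF bF zF _ _ fr, of "complex_of_real d"])
        show "\<forall>s\<ge>0. z + complex_of_real s * complex_of_real d \<notin> Cyc"
        proof (intro allI impI)
          fix s :: real assume s: "s \<ge> 0"
          let ?y = "z + complex_of_real s * complex_of_real d"
          have "g1 ?y = g1 z - s * \<bar>\<Delta> (Im z)\<bar>"
            unfolding g1_def d_def by (simp add: algebra_simps abs_sgn)
          then have "g1 ?y < 0" using 3 s by (smt (verit) abs_ge_zero mult_nonneg_nonneg)
          then show "?y \<notin> Cyc" using cyc_gpos by force
        qed
      qed (use dnz in simp)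
    next
      case 4
      define d where "d = sgn (\<Delta> (Im z))"
      have dnz: "d \<noteq> 0" using Dnz 4 unfolding d_def by (simp add: sgn_eq_0_iff)
      show False
      proof (rule ray_escape[OF bF zF _ _ fr, of "complex_of_real d"])
        show "\<forall>s\<ge>0. z + complex_of_real s * complex_of_real d \<notin> Cyc"
        proof (intro allI impI)
          fix s :: real assume s: "s \<ge> 0"
          let ?y = "z + complex_of_real s * complex_of_real d"
          have "g2 ?y = g2 z - s * \<bar>\<Delta> (Im z)\<bar>"
            unfolding g2_def d_def by (simp add: algebra_simps abs_sgn)
          then have "g2 ?y < 0" using 4 s by (smt (verit) abs_ge_zero mult_nonneg_nonneg)
          then show "?y \<notin> Cyc" using cyc_gpos by force
        qed
      qed (use dnz in simp)
    qed
  qed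
  define M where "M = (\<lambda>p. Complex (xL (fst p) + snd p * \<Delta> (fst p)) (fst p)) ` ({lo<..<hi} \<times> {0<..<1::real})"
  have cM: "connected M"
  proof -
    have c1: "continuous_on ({lo<..<hi} \<times> {0<..<1::real}) (\<lambda>p. xL (fst p))"
      by (rule continuous_on_compose2[OF contL]) (auto intro: continuous_intros)
    have c2: "continuous_on ({lo<..<hi} \<times> {0<..<1::real}) (\<lambda>p. xR (fst p))"
      by (rule continuous_on_compose2[OF contR]) (auto intro: continuous_intros)
    have "continuous_on ({lo<..<hi} \<times> {0<..<1::real}) (\<lambda>p. Complex (xL (fst p) + snd p * \<Delta> (fst p)) (fst p))"
      unfolding Complex_eq \<Delta>_def using c1 c2 by (intro continuous_intros) auto
    then show ?thesis unfolding M_def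
      by (intro connected_continuous_image connected_Times) auto
  qed
  have MC: "M \<inter> Cyc = {}"
  proof -
    have "y \<notin> Cyc" if "y \<in> M" for y
    proof -
      obtain h s where hs: "lo < h" "h < hi" "0 < s" "s < 1" "y = Complex (xL h + s * \<Delta> h) h"
        using \<open>y \<in> M\<close> unfolding M_def by auto
      have D: "\<Delta> h \<noteq> 0" using Dnz hs by auto
      have "g1 y = s * (\<Delta> h)\<^sup>2" "g2 y = (1 - s) * (\<Delta> h)\<^sup>2"
        unfolding g1_def g2_def hs(5) \<Delta>_def by (simp_all add: power2_eq_square algebra_simps)
      then have "g1 y > 0" "g2 y > 0" using hs D by auto
      then show ?thesis using cyc_g by force
    qed
    then show ?thesis by auto
  qed
  have SM: "z \<in> M" if "lo < Im z" "Im z < hi" "g1 z > 0" "g2 z > 0" for z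
  proof -
    define h where "h = Im z"
    have D: "\<Delta> h \<noteq> 0" using Dnz that unfolding h_def by auto
    define s where "s = (Re z - xL h) / \<Delta> h"
    have s1: "s = g1 z / (\<Delta> h)\<^sup>2" unfolding s_def g1_def h_def using D by (simp add: power2_eq_square)
    have s2: "1 - s = g2 z / (\<Delta> h)\<^sup>2"
    proof -
      have "1 - s = (xR h - Re z) / \<Delta> h" unfolding s_def using D by (simp add: field_simps \<Delta>_def)
      also have "\<dots> = g2 z / (\<Delta> h)\<^sup>2" unfolding g2_def h_def[symmetric] using D by (simp add: power2_eq_square)
      finally show ?thesis .
    qed
    have D2: "(\<Delta> h)\<^sup>2 > 0" using D by simp
    have "0 < s" using s1 that D2 by simp
    moreover have "0 < 1 - s" using s2 that D2 by simp
    ultimately have "0 < s" "s < 1" by auto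
    moreover have "z = Complex (xL h + s * \<Delta> h) h" unfolding s_def using D by (simp add: complex_eq_iff h_def)
    ultimately show ?thesis unfolding M_def using that h_def by (auto intro!: image_eqI[of _ _ "(h, s)"])
  qed
  have FM: "F \<subseteq> M" using FS SM by auto
  have MF: "M \<subseteq> F"
  proof (rule ccontr)
    assume "\<not> M \<subseteq> F"
    then have "M - F \<noteq> {}" by auto
    moreover have "M \<inter> F \<noteq> {}" using FM Fne by auto
    ultimately have "M \<inter> frontier F \<noteq> {}" using connected_Int_frontier[OF cM] by auto
    then show False using MC front by auto
  qed
  have S_F: "z \<in> F" if "lo < Im z" "Im z < hi" "g1 z > 0" "g2 z > 0" for z
    using SM[OF that] MF by auto
  define kw where "kw = idx w"
  have vsw: "idx vs < kw" using fwd[of vs w] edges(1) spanning unfolding kw_def by auto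
  have wvt: "kw < idx vt" using fwd[of w vt] edges(2) spanning unfolding kw_def by auto
  have "\<exists>i<Suc r. idx (u i) < kw \<and> kw < idx (u (Suc i))"
  proof (rule find_gap[of "\<lambda>j. idx (u j)"])
    show "idx (u 0) < kw" using vsw u0 by simp
    show "kw < idx (u (Suc r))" using wvt ur by simp
    show "\<forall>j\<le>Suc r. idx (u j) \<noteq> kw" using idx_inj uV verts(2) w_not_u unfolding kw_def by metis
  qed
  then obtain i where i: "i < Suc r" "idx (u i) < kw" "kw < idx (u (Suc i))" by blast
  have ir: "i \<le> r" using i by simp
  have low: "idx (u j) \<le> idx (u i)" if "j \<le> i" for j using u_idx_le that ir by auto
  have high: "idx (u (Suc i)) \<le> idx (u j)" if "Suc i \<le> j" "j \<le> Suc r" for j using u_idx_le that by auto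
  have CVgap: "idx x \<le> idx (u i) \<or> x = w \<or> idx (u (Suc i)) \<le> idx x" if "x \<in> CV" for x
  proof -
    from that consider "x = w" | j where "j \<le> Suc r" "x = u j" unfolding CV_def by auto
    then show ?thesis
    proof cases
      case 1 then show ?thesis by simp
    next
      case 2 then show ?thesis using low high by (cases "j \<le> i") auto
    qed
  qed
  have CV_V: "x \<in> V" if "x \<in> CV" for x using that uV verts unfolding CV_def by auto
  have idx_w: "P!kw = w" "kw < length P" using idx[OF verts(2)] unfolding kw_def by auto
  have idx_u: "P!(idx (u j)) = u j" "idx (u j) < length P" if "j \<le> Suc r" for j
    using idx[OF uV[OF that]] by auto
  have core: "q = Suc p \<and> crv (P!p, P!q) ` {0<..<1} \<subseteq> F"
    if pq: "p < q" "q < length P" and nCV: "\<forall>n. p < n \<and> n < q \<longrightarrow> P!n \<notin> CV"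
      and hp: "lo < Im (pos (P!p))" "Im (pos (P!p)) < hi"
      and hq: "lo < Im (pos (P!q))" "Im (pos (P!q)) < hi"
      and fab: "(fa = g1 \<and> fb = g2) \<or> (fa = g2 \<and> fb = g1)"
      and fa0: "fa (pos (P!p)) > 0" and fb1: "fb (pos (P!q)) > 0"
      and nCE: "(P!p, P!q) \<notin> CE"
    for p q fa fb
  proof -
    define m where "m = q - p"
    define c where "c j = P!(p + j)" for j
    define \<gamma> where "\<gamma> j = crv (c j, c (Suc j))" for j
    have m1: "m \<ge> 1" using pq unfolding m_def by auto
    have cm: "c m = P!q" "c 0 = P!p" unfolding c_def m_def using pq by auto
    have chE: "\<forall>j<m. (c j, c (Suc j)) \<in> Eb"
    proof (intro allI impI)
      fix j assume "j < m"
      then have "Suc (p + j) < length P" using pq unfolding m_def by auto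
      then show "(c j, c (Suc j)) \<in> Eb" using Pedge[of "p + j"] unfolding c_def by simp
    qed
    have cV: "c j \<in> V" if "j \<le> m" for j using that pq PV unfolding c_def m_def by auto
    have \<gamma>p: "path (\<gamma> j)" if "j < m" for j using D.edge_path chE that unfolding \<gamma>_def by auto
    have \<gamma>0: "\<gamma> j 0 = pos (c j)" if "j < m" for j using D.edge_start chE that unfolding \<gamma>_def by auto
    have \<gamma>1: "\<gamma> j 1 = pos (c (Suc j))" if "j < m" for j using D.edge_finish chE that unfolding \<gamma>_def by auto
    have ht: "lo < Im z \<and> Im z < hi" if jm: "j < m" and zin: "z \<in> path_image (\<gamma> j)" for j z
    proof -
      have e: "(c j, c (Suc j)) \<in> Eb" using chE jm by auto
      have "Im (pos (c j)) \<le> Im z" "Im z \<le> Im (pos (c (Suc j)))"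
        using D.img_bounds[OF e] zin unfolding \<gamma>_def by auto
      moreover have "Im (pos (c 0)) \<le> Im (pos (c j))" "Im (pos (c (Suc j))) \<le> Im (pos (c m))"
        using D.chain_heights_le[OF chE] jm by auto
      ultimately show ?thesis using hp hq cm by auto
    qed
    have cont_f: "continuous_on (path_image (\<gamma> j)) f" if "j < m" "f = g1 \<or> f = g2" for j f
    proof -
      have sub: "path_image (\<gamma> j) \<subseteq> {z. Im z \<in> {lo..hi}}" using ht[OF that(1)] by fastforce
      show ?thesis using that(2) continuous_on_subset[OF contg1 sub] continuous_on_subset[OF contg2 sub] by auto
    qed
    have nzf: "f z \<noteq> 0" if "lo < Im z" "Im z < hi" "z \<notin> Cyc" "f = g1 \<or> f = g2" for f z
      using g_zero that by auto
    have notCV: "c j \<notin> CV" if "0 < j" "j < m" for j using nCV that unfolding c_def m_def by auto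
    have vert_avoid: "pos (c j) \<notin> Cyc" if j: "0 < j" "j < m" for j
    proof
      assume "pos (c j) \<in> Cyc"
      then obtain e' where e': "e' \<in> CE" "pos (c j) \<in> path_image (crv e')" using cyc_mem by blast
      have "c j = fst e' \<or> c j = snd e'" using D.edge_vert[of e' "c j"] e' CE_Eb cV j by auto
      then have "c j \<in> CV" using CE_CV[OF e'(1)] by auto
      then show False using notCV j by auto
    qed
    have curve_avoid: "\<gamma> j t \<notin> Cyc" if jt: "j < m" "t \<in> {0<..<1}" for j t
    proof
      assume "\<gamma> j t \<in> Cyc"
      then obtain e' where e': "e' \<in> CE" "\<gamma> j t \<in> path_image (crv e')" using cyc_mem by blast
      have e: "(c j, c (Suc j)) \<in> Eb" using chE jt by auto
      have tin: "\<gamma> j t \<in> path_image (\<gamma> j)" using jt unfolding path_image_def by auto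
      show False
      proof (cases "(c j, c (Suc j)) = e'")
        case True
        then have cc: "c j \<in> CV" "c (Suc j) \<in> CV" using CE_CV[OF e'(1)] by auto
        have "j = 0" using notCV[of j] cc jt by auto
        moreover have "Suc j = m"
        proof (rule ccontr)
          assume "Suc j \<noteq> m" then have "Suc j < m" using jt by auto
          then show False using notCV[of "Suc j"] cc by auto
        qed
        ultimately have "(P!p, P!q) = e'" using True cm by auto
        then show False using nCE e' by auto
      next
        case False
        have e'Eb: "e' \<in> Eb" using e' CE_Eb by auto
        have "\<gamma> j t \<in> pos ` ({c j, c (Suc j)} \<inter> {fst e', snd e'})"
          using D.edge_disj[OF e e'Eb False] e' tin unfolding \<gamma>_def by auto
        then have "\<gamma> j t = pos (c j) \<or> \<gamma> j t = pos (c (Suc j))" by auto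
        moreover have "Im (pos (c j)) < Im (\<gamma> j t)" "Im (\<gamma> j t) < Im (pos (c (Suc j)))"
          using D.open_part[OF e jt(2)] unfolding \<gamma>_def by auto
        ultimately show False by auto
      qed
    qed
    have ht_pt: "lo < Im (\<gamma> j t) \<and> Im (\<gamma> j t) < hi" if "j < m" "t \<in> {0..1}" for j t
      using ht[OF that(1)] that(2) unfolding path_image_def by auto
    have nz_open: "\<forall>j<m. \<forall>t\<in>{0<..<1}. f (\<gamma> j t) \<noteq> 0" if "f = g1 \<or> f = g2" for f
    proof (intro allI impI ballI)
      fix j t assume "j < m" "t \<in> {0<..<1::real}"
      then show "f (\<gamma> j t) \<noteq> 0" using nzf[OF _ _ curve_avoid that] ht_pt[of j t] by auto
    qed
    have nz_vert: "\<forall>j. Suc j < m \<longrightarrow> f (\<gamma> j 1) \<noteq> 0" if "f = g1 \<or> f = g2" for f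
    proof (intro allI impI)
      fix j assume j: "Suc j < m"
      have "\<gamma> j 1 \<notin> Cyc" using vert_avoid[of "Suc j"] \<gamma>1[of j] j by auto
      then show "f (\<gamma> j 1) \<noteq> 0" using nzf[OF _ _ _ that] ht_pt[of j 1] j by auto
    qed
    have link: "\<forall>j. Suc j < m \<longrightarrow> \<gamma> j 1 = \<gamma> (Suc j) 0" using \<gamma>0 \<gamma>1 by auto
    have fa_fwd: "\<forall>j<m. \<forall>t\<in>{0..<1}. fa (\<gamma> j t) > 0"
    proof (rule chain_pos_fwd[OF _ _ link])
      show "\<forall>j<m. path (\<gamma> j)" using \<gamma>p by auto
      show "\<forall>j<m. continuous_on (path_image (\<gamma> j)) fa" using cont_f fab by auto
      show "fa (\<gamma> 0 0) > 0" using \<gamma>0[of 0] m1 cm fa0 by auto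
      show "\<forall>j<m. \<forall>t\<in>{0<..<1}. fa (\<gamma> j t) \<noteq> 0" using nz_open fab by auto
      show "\<forall>j. Suc j < m \<longrightarrow> fa (\<gamma> j 1) \<noteq> 0" using nz_vert fab by auto
    qed
    have fb_bwd: "\<forall>j<m. \<forall>t\<in>{0<..1}. fb (\<gamma> j t) > 0"
    proof (rule chain_pos_bwd[OF _ _ link _ m1])
      show "\<forall>j<m. path (\<gamma> j)" using \<gamma>p by auto
      show "\<forall>j<m. continuous_on (path_image (\<gamma> j)) fb" using cont_f fab by auto
      show "fb (\<gamma> (m - 1) 1) > 0" using \<gamma>1[of "m - 1"] m1 cm fb1 by auto
      show "\<forall>j<m. \<forall>t\<in>{0<..<1}. fb (\<gamma> j t) \<noteq> 0" using nz_open fab by auto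
      show "\<forall>j. Suc j < m \<longrightarrow> fb (\<gamma> j 1) \<noteq> 0" using nz_vert fab by auto
    qed
    have both: "z \<in> F" if "fa z > 0" "fb z > 0" "lo < Im z" "Im z < hi" for z
      using S_F[of z] that fab by auto
    have m_eq: "m = 1"
    proof (rule ccontr)
      assume "m \<noteq> 1" then have m2: "1 < m" using m1 by auto
      have g01: "\<gamma> 0 1 = pos (c 1)" using \<gamma>1[of 0] m2 by simp
      have g10: "\<gamma> 1 0 = pos (c 1)" using \<gamma>0[of 1] m2 by simp
      have z1: "fb (pos (c 1)) > 0" using fb_bwd[rule_format, of 0 1] m2 g01 by simp
      have z2: "fa (pos (c 1)) > 0" using fa_fwd[rule_format, of 1 0] m2 g10 by simp
      have z3: "lo < Im (pos (c 1)) \<and> Im (pos (c 1)) < hi" using ht_pt[of 0 1] g01 m2 by auto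
      have "pos (c 1) \<in> F" using both z1 z2 z3 by auto
      moreover have "pos (c 1) \<in> DI" using posD cV m2 by auto
      ultimately show False using FD by auto
    qed
    then have qp: "q = Suc p" unfolding m_def using pq by auto
    have "crv (P!p, P!q) ` {0<..<1} \<subseteq> F"
    proof
      fix y assume "y \<in> crv (P!p, P!q) ` {0<..<1}"
      then obtain t where t: "t \<in> {0<..<1::real}" "y = crv (P!p, P!q) t" by auto
      have y: "y = \<gamma> 0 t" using t qp unfolding \<gamma>_def c_def by auto
      have "fa (\<gamma> 0 t) > 0" using fa_fwd[rule_format, of 0 t] m_eq t by simp
      moreover have "fb (\<gamma> 0 t) > 0" using fb_bwd[rule_format, of 0 t] m_eq t by simp
      moreover have "lo < Im (\<gamma> 0 t) \<and> Im (\<gamma> 0 t) < hi" using ht_pt[of 0 t] m_eq t by simp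
      ultimately show "y \<in> F" using both[of "\<gamma> 0 t"] y by auto
    qed
    then show ?thesis using qp by auto
  qed
  have in_aug: "e \<in> augmenting_edges_in E P crv F"
    if pE: "e \<in> path_edges P" and inF: "crv e ` {0<..<1} \<subseteq> F" for e
  proof -
    have "e \<notin> E"
    proof
      assume "e \<in> E"
      then have "crv e (1/2) \<in> DI" using imgD[of e] unfolding path_image_def by auto
      moreover have "crv e (1/2) \<in> F" using inF by auto
      ultimately show False using FD by auto
    qed
    then show ?thesis using pE inF unfolding augmenting_edges_in_def by auto
  qed
  have augL: "(u i, w) \<in> augmenting_edges_in E P crv F" if i1: "i \<ge> 1"
  proof -
    define p where "p = idx (u i)"
    have Pp: "P!p = u i" "p < length P" using idx_u[of i] ir unfolding p_def by auto
    have nCE: "(u i, w) \<notin> CE"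
    proof
      assume "(u i, w) \<in> CE"
      then consider "u i = vs" | "u i = w" | j where "j < Suc r" "w = u (Suc j)" unfolding CE_def by auto
      then show False
      proof cases
        case 1 then show False using u_idx_mono[of 0 i] i1 ir u0 by auto
      next
        case 2 then show False using w_not_u[of i] ir by auto
      next
        case 3 then show False using w_not_u[of "Suc j"] by auto
      qed
    qed
    have "kw = Suc p \<and> crv (P!p, P!kw) ` {0<..<1} \<subseteq> F"
    proof (rule core[of p kw g1 g2])
      show "p < kw" using i unfolding p_def by simp
      show "kw < length P" using idx_w by simp
      show "\<forall>n. p < n \<and> n < kw \<longrightarrow> P!n \<notin> CV"
      proof (intro allI impI notI)
        fix n assume n: "p < n \<and> n < kw" and inCV: "P!n \<in> CV"
        have nl: "n < length P" using n idx_w by auto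
        have "idx (P!n) = n" using idx_nth nl by auto
        then show False using CVgap[OF inCV] n i idx_w unfolding p_def kw_def by auto
      qed
      show "lo < Im (pos (P!p))" "Im (pos (P!p)) < hi" using hu_lo[of i] hu_hi[of i] i1 ir Pp by auto
      show "lo < Im (pos (P!kw))" "Im (pos (P!kw)) < hi" using hw idx_w by auto
      show "g1 (pos (P!p)) > 0"
        using R_g1[of "pos (u i)"] D.chain_vert[OF uEb, of i] hu_lo[of i] hu_hi[of i] i1 ir Pp by auto
      show "g2 (pos (P!kw)) > 0"
        using L_g2[of "pos w"] D.chain_vert[OF lcEb, of 1] lc1 hw idx_w by auto
      show "(P!p, P!kw) \<notin> CE" using nCE Pp idx_w by auto
    qed auto
    then have "(u i, w) \<in> path_edges P" "crv (u i, w) ` {0<..<1} \<subseteq> F"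
      using pe_mem[of p] idx_w Pp by auto
    then show ?thesis using in_aug by auto
  qed
  have augR: "(w, u (Suc i)) \<in> augmenting_edges_in E P crv F" if ir1: "Suc i \<le> r"
  proof -
    define q where "q = idx (u (Suc i))"
    have Pq: "P!q = u (Suc i)" "q < length P" using idx_u[of "Suc i"] ir unfolding q_def by auto
    have nCE: "(w, u (Suc i)) \<notin> CE"
    proof
      assume "(w, u (Suc i)) \<in> CE"
      then consider "w = vs" | "u (Suc i) = vt" | j where "j < Suc r" "w = u j" unfolding CE_def by auto
      then show False
      proof cases
        case 1 then show False using dist by auto
      next
        case 2 then show False using u_idx_mono[of "Suc i" "Suc r"] ir1 ur by auto
      next
        case 3 then show False using w_not_u[of j] by auto
      qed
    qed
    have "q = Suc kw \<and> crv (P!kw, P!q) ` {0<..<1} \<subseteq> F"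
    proof (rule core[of kw q g2 g1])
      show "kw < q" using i unfolding q_def by simp
      show "q < length P" using Pq by simp
      show "\<forall>n. kw < n \<and> n < q \<longrightarrow> P!n \<notin> CV"
      proof (intro allI impI notI)
        fix n assume n: "kw < n \<and> n < q" and inCV: "P!n \<in> CV"
        have nl: "n < length P" using n Pq by auto
        have "idx (P!n) = n" using idx_nth nl by auto
        then show False using CVgap[OF inCV] n i idx_w unfolding q_def kw_def by auto
      qed
      show "lo < Im (pos (P!q))" "Im (pos (P!q)) < hi" using hu_lo[of "Suc i"] hu_hi[of "Suc i"] ir1 Pq by auto
      show "lo < Im (pos (P!kw))" "Im (pos (P!kw)) < hi" using hw idx_w by auto
      show "g1 (pos (P!q)) > 0"
        using R_g1[of "pos (u (Suc i))"] D.chain_vert[OF uEb, of "Suc i"] hu_lo[of "Suc i"] hu_hi[of "Suc i"] ir1 Pq by auto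
      show "g2 (pos (P!kw)) > 0"
        using L_g2[of "pos w"] D.chain_vert[OF lcEb, of 1] lc1 hw idx_w by auto
      show "(P!kw, P!q) \<notin> CE" using nCE Pq idx_w by auto
    qed auto
    then have "(w, u (Suc i)) \<in> path_edges P" "crv (w, u (Suc i)) ` {0<..<1} \<subseteq> F"
      using pe_mem[of kw] idx_w Pq by auto
    then show ?thesis using in_aug by auto
  qed
  have aug_sub: "(e = (u i, w) \<and> i \<ge> 1) \<or> (e = (w, u (Suc i)) \<and> Suc i \<le> r)"
    if eA: "e \<in> augmenting_edges_in E P crv F" for e
  proof -
    have eP: "e \<in> path_edges P" and eE: "e \<notin> E" and eF: "crv e ` {0<..<1} \<subseteq> F"
      using eA unfolding augmenting_edges_in_def by auto
    obtain n where n: "Suc n < length P" "e = (P!n, P!Suc n)" using pe_cases[OF eP] by auto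
    have eEb: "e \<in> Eb" using eP Pe by auto
    have cl: "crv e ` {0..1} \<subseteq> closure F"
    proof -
      have "crv e ` closure {0<..<1} \<subseteq> closure F"
      proof (rule image_closure_subset)
        show "continuous_on (closure {0<..<1}) (crv e)" using D.edge_path[OF eEb] by (simp add: path_def)
        show "crv e ` {0<..<1} \<subseteq> closure F" using eF closure_subset by blast
      qed simp
      then show ?thesis by simp
    qed
    have endCV: "x \<in> CV" if xV: "x \<in> V" and xc: "pos x \<in> closure F" for x
    proof -
      have "pos x \<notin> F" using posD[OF xV] FD by auto
      then have "pos x \<in> frontier F" using xc interior_subset[of F] unfolding frontier_def by auto
      then have "pos x \<in> Cyc" using front by simp
      then obtain e' where e': "e' \<in> CE" "pos x \<in> path_image (crv e')" using cyc_mem by blast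
      then have "x = fst e' \<or> x = snd e'" using D.edge_vert[of e' x] CE_Eb xV by auto
      then show ?thesis using CE_CV[OF e'(1)] by auto
    qed
    have xV: "P!n \<in> V" "P!Suc n \<in> V" using n PV by auto
    have "pos (P!n) \<in> closure F" using cl D.edge_start[OF eEb] n by force
    then have xCV: "P!n \<in> CV" using endCV xV by auto
    have "crv e 1 \<in> closure F" using cl by auto
    then have "pos (P!Suc n) \<in> closure F" using D.edge_finish[OF eEb] n by simp
    then have yCV: "P!Suc n \<in> CV" using endCV xV by auto
    have ix: "idx (P!n) = n" and iy: "idx (P!Suc n) = Suc n" using idx_nth n by auto
    have uCV: "\<exists>j\<le>Suc r. x = u j" if "x \<in> CV" "x \<noteq> w" for x using that unfolding CV_def by auto
    show ?thesis
    proof (cases "P!n = w")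
      case xw: True
      then have nk: "n = kw" using ix unfolding kw_def by simp
      have "P!Suc n \<noteq> w" using xw ix iy by auto
      then obtain j where j: "j \<le> Suc r" "P!Suc n = u j" using uCV yCV by blast
      have "\<not> j \<le> i" using low[of j] iy j nk i by auto
      then have "idx (u (Suc i)) \<le> idx (u j)" using high j by auto
      then have "idx (u (Suc i)) = idx (u j)" using iy j nk i by auto
      then have yu: "P!Suc n = u (Suc i)" using idx_inj uV i j by auto
      have "Suc i \<noteq> Suc r" using yu xw n eE edges(2) ur by auto
      then show ?thesis using xw yu n i by auto
    next
      case xnw: False
      show ?thesis
      proof (cases "P!Suc n = w")
        case yw: True
        then have nk: "Suc n = kw" using iy unfolding kw_def by simp
        obtain j where j: "j \<le> Suc r" "P!n = u j" using uCV xCV xnw by blast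
        have "j \<le> i"
        proof (rule ccontr)
          assume "\<not> j \<le> i" then show False using high[of j] ix j nk i by auto
        qed
        then have "idx (u j) \<le> idx (u i)" using low by auto
        then have "idx (u i) = idx (u j)" using ix j nk i by auto
        then have xu: "P!n = u i" using idx_inj uV i j by auto
        have "i \<noteq> 0"
        proof
          assume "i = 0"
          then have "e = (vs, w)" using xu yw n u0 by simp
          then show False using eE edges(1) by simp
        qed
        then show ?thesis using yw xu n by auto
      next
        case ynw: False
        obtain j where j: "j \<le> Suc r" "P!n = u j" using uCV xCV xnw by blast
        obtain l where l: "l \<le> Suc r" "P!Suc n = u l" using uCV yCV ynw by blast
        have jl: "idx (u l) = Suc (idx (u j))" using ix iy j l by auto
        have "j < l"
        proof (rule ccontr)
          assume "\<not> j < l" then show False using u_idx_le[of l j] jl j by auto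
        qed
        moreover have "\<not> Suc j < l"
        proof
          assume "Suc j < l"
          then show False using u_idx_mono[of j "Suc j"] u_idx_mono[of "Suc j" l] jl l by auto
        qed
        ultimately have "l = Suc j" by auto
        then have "e \<in> E" using uE n j l by auto
        then show ?thesis using eE by auto
      qed
    qed
  qed
  have aug_eq: "augmenting_edges_in E P crv F =
      (if i \<ge> 1 then {(u i, w)} else {}) \<union> (if Suc i \<le> r then {(w, u (Suc i))} else {})"
  proof
    show "augmenting_edges_in E P crv F \<subseteq>
      (if i \<ge> 1 then {(u i, w)} else {}) \<union> (if Suc i \<le> r then {(w, u (Suc i))} else {})"
      using aug_sub by auto
    show "(if i \<ge> 1 then {(u i, w)} else {}) \<union> (if Suc i \<le> r then {(w, u (Suc i))} else {})
      \<subseteq> augmenting_edges_in E P crv F"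
      using augL augR by auto
  qed
  consider "i = 0" | "i = r" | "1 \<le> i" "i < r" using ir r_pos by linarith
  then show ?thesis
  proof cases
    case 1
    then have "augmenting_edges_in E P crv F = {(w, v 1)}" using aug_eq r_pos uv[of 1] by auto
    then show ?thesis by simp
  next
    case 2
    then have "augmenting_edges_in E P crv F = {(v r, w)}" using aug_eq r_pos uv[of r] by auto
    then show ?thesis by simp
  next
    case 3
    then have "augmenting_edges_in E P crv F = {(v i, w), (w, v (Suc i))}"
      using aug_eq uv[of i] uv[of "Suc i"] by auto
    then show ?thesis using 3 by blast
  qed
qed
end
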